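(* Let $T$ be a complete $L$-theory and $\phi(x,y)$ an $L$-formula. Suppose there are infinite sequences $(a_i:i<\omega)$ and $(b_j:j<\omega)$ in some model of $T$, a natural number $N$ and a set $E\subseteq\{1,\ldots,N\}$ such that (i) for all $i_1<\cdots<i_N<\omega$, $\psi(a_{i_1},\ldots,a_{i_N})$ holds, where $$\psi(x_1,\ldots,x_N):=\neg\Big(\exists y\big(\bigwedge_{k\in E}\phi(x_k,y)\wedge\bigwedge_{k\in\{1,\ldots,N\}\setminus E}\neg\phi(x_k,y)\big)\Big);$$ (ii) $\phi(a_i,b_j)$ holds if and only if $i<j$. Then $T$ has the strict order property.
   Context: Let $\mathcal U$ be the monster model of $T$. A formula $\theta(x,y)$ (possibly in several variables) has the strict order property for $T$ if there is a sequence $(c_i:i<\omega)$ in $\mathcal U$ with $\theta(\mathcal U,c_i)\subsetneqq\theta(\mathcal U,c_{i+1})$ for all $i<\omega$. $T$ has the strict order property (SOP) if some $L$-formula has the strict order property for $T$. *)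

theory Defs
  imports Main
begin

text \<open>Function and relation symbols
 of the language L are elements of the types 'f and 'p; they are applied to
 argument lists (arities are not constrained, which only makes the setting
 more general).\<close>

datatype 'f trm = Var nat | Fn 'f "'f trm list"

datatype ('f, 'p) fm =
    FFalse
  | FEq "'f trm" "'f trm"
  | FRel 'p "'f trm list"
  | FNot "('f, 'p) fm"
  | FAnd "('f, 'p) fm" "('f, 'p) fm"
  | FEx nat "('f, 'p) fm"

record ('a, 'f, 'p) struct =
  dom :: "'a set"
  fint :: "'f \<Rightarrow> 'a list \<Rightarrow> 'a"
  rint :: "'p \<Rightarrow> 'a list \<Rightarrow> bool"

definition is_struct :: "('a, 'f, 'p) struct \<Rightarrow> bool" where
  "is_struct M \<longleftrightarrow> dom M \<noteq> {} \<and>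
     (\<forall>f as. set as \<subseteq> dom M \<longrightarrow> fint M f as \<in> dom M)"

fun tval :: "('a, 'f, 'p) struct \<Rightarrow> (nat \<Rightarrow> 'a) \<Rightarrow> 'f trm \<Rightarrow> 'a" where
  "tval M e (Var v) = e v"
| "tval M e (Fn f ts) = fint M f (map (tval M e) ts)"

fun sat :: "('a, 'f, 'p) struct \<Rightarrow> (nat \<Rightarrow> 'a) \<Rightarrow> ('f, 'p) fm \<Rightarrow> bool" where
  "sat M e FFalse = False"
| "sat M e (FEq s t) = (tval M e s = tval M e t)"
| "sat M e (FRel p ts) = rint M p (map (tval M e) ts)"
| "sat M e (FNot \<phi>) = (\<not> sat M e \<phi>)"
| "sat M e (FAnd \<phi> \<psi>) = (sat M e \<phi> \<and> sat M e \<psi>)"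
| "sat M e (FEx x \<phi>) = (\<exists>a\<in>dom M. sat M (e(x := a)) \<phi>)"

fun fvt :: "'f trm \<Rightarrow> nat set" where
  "fvt (Var v) = {v}"
| "fvt (Fn f ts) = (\<Union>t\<in>set ts. fvt t)"

fun fv :: "('f, 'p) fm \<Rightarrow> nat set" where
  "fv FFalse = {}"
| "fv (FEq s t) = fvt s \<union> fvt t"
| "fv (FRel p ts) = (\<Union>t\<in>set ts. fvt t)"
| "fv (FNot \<phi>) = fv \<phi>"
| "fv (FAnd \<phi> \<psi>) = fv \<phi> \<union> fv \<psi>"
| "fv (FEx x \<phi>) = fv \<phi> - {x}"

text \<open>A formula \<phi>(x,y) with x an n-tuple and y an m-tuple of variables:
 x is the variables 0..n-1, y the variables n..n+m-1.\<close>
definition is_formula2 :: "nat \<Rightarrow> nat \<Rightarrow> ('f, 'p) fm \<Rightarrow> bool" where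
  "is_formula2 n m \<phi> \<longleftrightarrow> fv \<phi> \<subseteq> {..<n+m}"

definition asg2 :: "nat \<Rightarrow> 'a list \<Rightarrow> 'a list \<Rightarrow> nat \<Rightarrow> 'a" where
  "asg2 n a b v = (if v < n then a ! v else b ! (v - n))"

definition holds2 :: "('a, 'f, 'p) struct \<Rightarrow> nat \<Rightarrow> ('f, 'p) fm \<Rightarrow> 'a list \<Rightarrow> 'a list \<Rightarrow> bool" where
  "holds2 M n \<phi> a b \<longleftrightarrow> sat M (asg2 n a b) \<phi>"

definition tuple :: "('a, 'f, 'p) struct \<Rightarrow> nat \<Rightarrow> 'a list \<Rightarrow> bool" where
  "tuple M k a \<longleftrightarrow> length a = k \<and> set a \<subseteq> dom M"

definition defset :: "('a, 'f, 'p) struct \<Rightarrow> nat \<Rightarrow> ('f, 'p) fm \<Rightarrow> 'a list \<Rightarrow> 'a list set" where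
  "defset M n \<theta> c = {x. tuple M n x \<and> holds2 M n \<theta> x c}"

text \<open>Since the monster
 model of Th(M) cannot be formalized, we use the standard equivalent (by
 compactness/saturation): some formula \<theta>(x,y) has strict chains of every finite
 length in M (equivalently, the corresponding sentences belong to Th(M)).\<close>
definition Th_has_SOP :: "('a, 'f, 'p) struct \<Rightarrow> bool" where
  "Th_has_SOP M \<longleftrightarrow> (\<exists>n m (\<theta> :: ('f, 'p) fm). is_formula2 n m \<theta> \<and>
     (\<forall>k. \<exists>c. (\<forall>i\<le>k. tuple M m (c i)) \<and>
        (\<forall>i<k. defset M n \<theta> (c i) \<subset> defset M n \<theta> (c (Suc i)))))"

end

theory Submission imports Defs "HOL-Library.Ramsey" "HOL-Library.Infinite_Set" begin

fun rent :: "(nat \<Rightarrow> nat) \<Rightarrow> 'f trm \<Rightarrow> 'f trm" where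
  "rent \<pi> (Var v) = Var (\<pi> v)"
| "rent \<pi> (Fn f ts) = Fn f (map (rent \<pi>) ts)"

fun ren :: "(nat \<Rightarrow> nat) \<Rightarrow> ('f,'p) fm \<Rightarrow> ('f,'p) fm" where
  "ren \<pi> FFalse = FFalse"
| "ren \<pi> (FEq s t) = FEq (rent \<pi> s) (rent \<pi> t)"
| "ren \<pi> (FRel p ts) = FRel p (map (rent \<pi>) ts)"
| "ren \<pi> (FNot \<phi>) = FNot (ren \<pi> \<phi>)"
| "ren \<pi> (FAnd \<phi> \<psi>) = FAnd (ren \<pi> \<phi>) (ren \<pi> \<psi>)"
| "ren \<pi> (FEx x \<phi>) = FEx (\<pi> x) (ren \<pi> \<phi>)"

lemma tval_rent: "tval M e (rent \<pi> t) = tval M (e \<circ> \<pi>) t"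
  by (induction \<pi> t rule: rent.induct) (auto cong: map_cong)

lemma fvt_rent: "fvt (rent \<pi> t) = \<pi> ` fvt t"
  by (induction \<pi> t rule: rent.induct) auto

lemma sat_ren: "inj \<pi> \<Longrightarrow> sat M e (ren \<pi> \<phi>) = sat M (e \<circ> \<pi>) \<phi>"
proof (induction \<phi> arbitrary: e)
  case (FEx x \<phi>)
  have upd: "\<And>a. (e(\<pi> x := a)) \<circ> \<pi> = (e \<circ> \<pi>)(x := a)"
    using FEx.prems by (auto simp: fun_eq_iff inj_eq)
  have "sat M e (ren \<pi> (FEx x \<phi>)) = (\<exists>a\<in>dom M. sat M (e(\<pi> x := a)) (ren \<pi> \<phi>))" by simp
  also have "\<dots> = (\<exists>a\<in>dom M. sat M ((e(\<pi> x := a)) \<circ> \<pi>) \<phi>)" by (intro bex_cong refl FEx.IH[OF FEx.prems])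
  also have "\<dots> = (\<exists>a\<in>dom M. sat M ((e \<circ> \<pi>)(x := a)) \<phi>)" by (simp only: upd)
  finally show ?case by (simp only: sat.simps ren.simps)
qed (auto simp: tval_rent comp_def)

lemma fv_ren: "inj \<pi> \<Longrightarrow> fv (ren \<pi> \<phi>) = \<pi> ` fv \<phi>"
  by (induction \<phi>) (auto simp: fvt_rent image_set_diff)

lemma tval_coinc: "(\<forall>v\<in>fvt t. e v = e' v) \<Longrightarrow> tval M e t = tval M e' t"
  by (induction t rule: fvt.induct) (auto cong: map_cong)

lemma sat_coinc: "(\<forall>v\<in>fv \<phi>. e v = e' v) \<Longrightarrow> sat M e \<phi> = sat M e' \<phi>"
proof (induction \<phi> arbitrary: e e')
  case (FEq s t)
  then show ?case using tval_coinc[of s e e' M] tval_coinc[of t e e' M] by simp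
next
  case (FRel p ts)
  have "map (tval M e) ts = map (tval M e') ts"
  proof (rule map_cong[OF refl])
    fix t assume "t \<in> set ts"
    then show "tval M e t = tval M e' t" using FRel by (intro tval_coinc) auto
  qed
  then show ?case by (simp only: sat.simps)
next
  case (FNot \<phi>)
  then show ?case by simp
next
  case (FAnd \<phi> \<psi>)
  have "sat M e \<phi> = sat M e' \<phi>" by (rule FAnd.IH(1)) (use FAnd.prems in auto)
  moreover have "sat M e \<psi> = sat M e' \<psi>" by (rule FAnd.IH(2)) (use FAnd.prems in auto)
  ultimately show ?case by simp
next
  case (FEx x \<phi>)
  have "sat M (e(x:=a)) \<phi> = sat M (e'(x:=a)) \<phi>" for a
    by (rule FEx.IH) (use FEx.prems in auto)
  then show ?case by simp
qed simp

definition vmap :: "nat \<Rightarrow> nat \<Rightarrow> nat \<Rightarrow> nat \<Rightarrow> nat" where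
  "vmap n m l v = (if v < n then m + l*n + v else if v < n+m then v - n else v + m + l*n)"

lemma inj_vmap: "inj (vmap n m l)"
  unfolding inj_def vmap_def by (auto split: if_splits)

lemma sat_ren_vmap: "sat M e (ren (vmap n m l) \<phi>) = sat M (\<lambda>v. e (vmap n m l v)) \<phi>"
  using sat_ren[OF inj_vmap] by (simp add: comp_def)

definition thetaF :: "nat \<Rightarrow> nat \<Rightarrow> ('f,'p) fm \<Rightarrow> (bool \<times> nat) list \<Rightarrow> ('f,'p) fm" where
  "thetaF n m \<phi> lits = foldr (\<lambda>(s,l) acc. FAnd (if s then ren (vmap n m l) \<phi> else FNot (ren (vmap n m l) \<phi>)) acc) lits (FNot FFalse)"

lemma sat_thetaF: "sat M e (thetaF n m \<phi> lits) \<longleftrightarrow> (\<forall>(s,l)\<in>set lits. sat M (\<lambda>v. e (vmap n m l v)) \<phi> = s)"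
proof (induction lits)
  case (Cons p lits)
  obtain s l where p: "p = (s,l)" by fastforce
  show ?case using Cons by (cases s) (auto simp: p thetaF_def sat_ren_vmap)
qed (simp add: thetaF_def)

lemma fv_thetaF: "fv (thetaF n m \<phi> lits) \<subseteq> (\<Union>(s,l)\<in>set lits. vmap n m l ` fv \<phi>)"
proof (induction lits)
  case (Cons p lits)
  obtain s l where p: "p = (s,l)" by fastforce
  show ?case using Cons by (cases s) (auto simp: p thetaF_def fv_ren inj_vmap)
qed (simp add: thetaF_def)

lemma nth_concat_blocks:
  "(\<forall>l<L. length (B l) = n) \<Longrightarrow> l < L \<Longrightarrow> v < n \<Longrightarrow> concat (map B [0..<L]) ! (l*n+v) = B l ! v"
proof (induction L)
  case (Suc L)
  have len: "length (concat (map B [0..<L])) = L*n" using Suc.prems(1)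
    by (induction L) (auto)
  show ?case
  proof (cases "l < L")
    case True
    have "Suc l * n \<le> L*n" by (rule mult_le_mono1) (use True in simp)
    then have "l*n+v < L*n" using Suc.prems(3) by simp
    then show ?thesis using Suc True len by (simp add: nth_append)
  next
    case False
    then have "l = L" using Suc.prems by simp
    then show ?thesis using len by (simp add: nth_append)
  qed
qed simp

lemma length_concat_blocks: "(\<forall>l<L. length (B l) = n) \<Longrightarrow> length (concat (map B [0..<L])) = L*n"
  by (induction L) auto

lemma holds_thetaF:
  assumes fv: "fv \<phi> \<subseteq> {..<n+m}" and ly: "length y = m"
    and lb: "\<forall>l<L. length (B l) = n" and ll: "\<forall>(s,l)\<in>set lits. l < L"
  shows "holds2 M m (thetaF n m \<phi> lits) y (concat (map B [0..<L])) \<longleftrightarrow>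
    (\<forall>(s,l)\<in>set lits. holds2 M n \<phi> (B l) y = s)"
proof -
  have "sat M (\<lambda>v. asg2 m y (concat (map B [0..<L])) (vmap n m l v)) \<phi> = holds2 M n \<phi> (B l) y"
    if "l < L" for l
    unfolding holds2_def
  proof (rule sat_coinc, intro ballI)
    fix v assume "v \<in> fv \<phi>"
    then have v: "v < n+m" using fv by auto
    show "asg2 m y (concat (map B [0..<L])) (vmap n m l v) = asg2 n (B l) y v"
    proof (cases "v < n")
      case True
      then show ?thesis using nth_concat_blocks[OF lb that True]
        by (simp add: asg2_def vmap_def)
    next
      case False
      have "v - n < m" using v False by arith
      then show ?thesis using v False by (simp add: asg2_def vmap_def)
    qed
  qed
  note key = this
  have "holds2 M m (thetaF n m \<phi> lits) y (concat (map B [0..<L])) \<longleftrightarrow>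
     (\<forall>(s,l)\<in>set lits. sat M (\<lambda>v. asg2 m y (concat (map B [0..<L])) (vmap n m l v)) \<phi> = s)"
    by (simp only: holds2_def sat_thetaF)
  also have "\<dots> \<longleftrightarrow> (\<forall>(s,l)\<in>set lits. holds2 M n \<phi> (B l) y = s)"
  proof (rule ball_cong[OF refl])
    fix x assume "x \<in> set lits"
    then obtain s l where x: "x = (s,l)" "l < L" using ll by (cases x) auto
    show "(case x of (s,l) \<Rightarrow> sat M (\<lambda>v. asg2 m y (concat (map B [0..<L])) (vmap n m l v)) \<phi> = s)
       = (case x of (s,l) \<Rightarrow> holds2 M n \<phi> (B l) y = s)"
      using key[OF x(2)] by (simp add: x(1))
  qed
  finally show ?thesis .
qed


lemma smo_comp: "strict_mono h \<Longrightarrow> strict_mono_on A idx \<Longrightarrow> strict_mono_on A (h \<circ> idx)"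
  unfolding strict_mono_on_def strict_mono_def by auto

lemma sorted_img:
  assumes "strict_mono_on {1..N} g"
  shows "sorted_list_of_set (g ` {1..N}) = map g [1..<Suc N]"
proof -
  have "sorted_wrt (\<lambda>x y. g x < g y) [1..<Suc N]"
    by (rule sorted_wrt_mono_rel[OF _ sorted_wrt_upt]) (use assms in \<open>auto simp: strict_mono_on_def\<close>)
  then have "sorted (map g [1..<Suc N])"
    by (intro strict_sorted_imp_sorted) (simp add: sorted_wrt_map)
  moreover have "distinct (map g [1..<Suc N])"
    unfolding distinct_map set_upt atLeastLessThanSuc_atLeastAtMost
    using strict_mono_on_imp_inj_on[OF assms] by simp
  moreover have "set (map g [1..<Suc N]) = g ` {1..N}"
    by (simp only: set_map set_upt atLeastLessThanSuc_atLeastAtMost)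
  moreover have fin: "finite (g ` {1..N})" by simp
  ultimately show ?thesis
    by (metis sorted_distinct_set_unique sorted_sorted_list_of_set distinct_sorted_list_of_set set_sorted_list_of_set)
qed

lemma ramsey_one:
  fixes Q :: "(nat \<Rightarrow> nat) \<Rightarrow> bool"
  assumes resp: "\<And>f g. (\<forall>p\<in>{1..N}. f p = g p) \<Longrightarrow> Q f = Q g"
  shows "\<exists>h::nat\<Rightarrow>nat. strict_mono h \<and> ((\<forall>idx. strict_mono_on {1..N} idx \<longrightarrow> Q (h \<circ> idx)) \<or>
           (\<forall>idx. strict_mono_on {1..N} idx \<longrightarrow> \<not> Q (h \<circ> idx)))"
proof -
  define f where "f X = (if Q (\<lambda>p. sorted_list_of_set X ! (p - 1)) then 0 else 1::nat)" for X
  have "\<forall>X. X \<subseteq> (UNIV::nat set) \<and> finite X \<and> card X = N \<longrightarrow> f X < 2" by (simp add: f_def)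
  from Ramsey[OF infinite_UNIV_nat this] obtain Y t where Y: "infinite Y" "t < 2"
    and hom: "\<forall>X. X \<subseteq> Y \<and> finite X \<and> card X = N \<longrightarrow> f X = t" by blast
  define h where "h = enumerate Y"
  have h: "strict_mono h" unfolding h_def using Y(1) by (rule strict_mono_enumerate)
  have hY: "h i \<in> Y" for i unfolding h_def using Y(1) by (rule enumerate_in_set)
  have key: "Q (h \<circ> idx) \<longleftrightarrow> t = 0" if idx: "strict_mono_on {1..N} idx" for idx
  proof -
    define g where "g = h \<circ> idx"
    have g: "strict_mono_on {1..N} g" unfolding g_def by (rule smo_comp[OF h idx])
    define X where "X = g ` {1..N}"
    have "X \<subseteq> Y" unfolding X_def g_def using hY by auto
    moreover have "card X = N" unfolding X_def
      using card_image[OF strict_mono_on_imp_inj_on[OF g]] by simp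
    ultimately have "f X = t" using hom unfolding X_def by auto
    moreover have "Q (\<lambda>p. sorted_list_of_set X ! (p - 1)) = Q g"
    proof (rule resp, intro ballI)
      fix p assume p: "p \<in> {1..N}"
      have "map g [1..<Suc N] ! (p - 1) = g (1 + (p - 1))"
        using p by (intro nth_map_upt) auto
      then show "sorted_list_of_set X ! (p - 1) = g p"
        using p unfolding X_def sorted_img[OF g] by simp
    qed
    ultimately show ?thesis unfolding f_def g_def by (auto split: if_splits)
  qed
  show ?thesis
  proof (intro exI[of _ h] conjI h)
    show "(\<forall>idx. strict_mono_on {1..N} idx \<longrightarrow> Q (h \<circ> idx)) \<or>
           (\<forall>idx. strict_mono_on {1..N} idx \<longrightarrow> \<not> Q (h \<circ> idx))"
      using key Y(2) by (cases "t = 0") auto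
  qed
qed

lemma ramsey_many:
  fixes Qs :: "((nat \<Rightarrow> nat) \<Rightarrow> bool) set"
  assumes "finite Qs" "\<forall>Q\<in>Qs. \<forall>f g. (\<forall>p\<in>{1..N}. f p = g p) \<longrightarrow> Q f = Q g"
  shows "\<exists>h::nat\<Rightarrow>nat. strict_mono h \<and> (\<forall>Q\<in>Qs. (\<forall>idx. strict_mono_on {1..N} idx \<longrightarrow> Q (h \<circ> idx)) \<or>
           (\<forall>idx. strict_mono_on {1..N} idx \<longrightarrow> \<not> Q (h \<circ> idx)))"
  using assms
proof (induction Qs rule: finite_induct)
  case empty
  have "strict_mono (id::nat \<Rightarrow> nat)" by (simp add: strict_mono_def)
  then show ?case by blast
next
  case (insert Q Qs)
  have "\<exists>h::nat\<Rightarrow>nat. strict_mono h \<and> (\<forall>Q\<in>Qs. (\<forall>idx. strict_mono_on {1..N} idx \<longrightarrow> Q (h \<circ> idx)) \<or>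
           (\<forall>idx. strict_mono_on {1..N} idx \<longrightarrow> \<not> Q (h \<circ> idx)))"
    by (rule insert.IH) (use insert.prems in blast)
  then obtain h :: "nat \<Rightarrow> nat" where h: "strict_mono h" and hh: "\<forall>Q\<in>Qs. (\<forall>idx. strict_mono_on {1..N} idx \<longrightarrow> Q (h \<circ> idx)) \<or>
           (\<forall>idx. strict_mono_on {1..N} idx \<longrightarrow> \<not> Q (h \<circ> idx))" by blast
  have "\<exists>h'::nat\<Rightarrow>nat. strict_mono h' \<and> ((\<forall>idx. strict_mono_on {1..N} idx \<longrightarrow> Q (h \<circ> (h' \<circ> idx))) \<or>
           (\<forall>idx. strict_mono_on {1..N} idx \<longrightarrow> \<not> Q (h \<circ> (h' \<circ> idx))))"
  proof (rule ramsey_one)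
    fix f g :: "nat \<Rightarrow> nat" assume "\<forall>p\<in>{1..N}. f p = g p"
    then have "\<forall>p\<in>{1..N}. (h \<circ> f) p = (h \<circ> g) p" by simp
    then show "Q (h \<circ> f) = Q (h \<circ> g)" using insert.prems by blast
  qed
  then obtain h' :: "nat \<Rightarrow> nat" where h': "strict_mono h'" and hq: "(\<forall>idx. strict_mono_on {1..N} idx \<longrightarrow> Q (h \<circ> (h' \<circ> idx))) \<or>
           (\<forall>idx. strict_mono_on {1..N} idx \<longrightarrow> \<not> Q (h \<circ> (h' \<circ> idx)))" by blast
  have sm: "strict_mono_on {1..N} (h' \<circ> idx)" if "strict_mono_on {1..N} idx" for idx
    by (rule smo_comp[OF h' that])
  show ?case
  proof (intro exI conjI ballI)
    show "strict_mono (h \<circ> h')" using h h' by (simp add: strict_mono_def)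
    fix Q' assume "Q' \<in> insert Q Qs"
    then show "(\<forall>idx. strict_mono_on {1..N} idx \<longrightarrow> Q' (h \<circ> h' \<circ> idx)) \<or>
           (\<forall>idx. strict_mono_on {1..N} idx \<longrightarrow> \<not> Q' (h \<circ> h' \<circ> idx))"
    proof
      assume "Q' = Q" then show ?thesis using hq by (simp add: comp_assoc)
    next
      assume "Q' \<in> Qs"
      then show ?thesis using hh sm by (metis comp_assoc)
    qed
  qed
qed

lemma not_init:
  assumes P: "P \<subseteq> {1..N}" and ni: "\<forall>t\<le>N. P \<noteq> {1..t}"
  shows "\<exists>k. 1 \<le> k \<and> Suc k \<le> N \<and> k \<notin> P \<and> Suc k \<in> P"
proof (rule ccontr)
  assume "\<not> ?thesis"
  then have H: "\<And>k. 1 \<le> k \<Longrightarrow> Suc k \<in> P \<Longrightarrow> k \<in> P" using P by fastforce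
  have down: "\<forall>q. 1 \<le> q \<longrightarrow> q + d = p \<longrightarrow> q \<in> P" if "p \<in> P" for p d
    using that by (induction d) (auto intro: H)
  define t where "t = (if P = {} then 0 else Max P)"
  have fin: "finite P" using P finite_subset by blast
  have "P = {1..t}"
  proof
    show "P \<subseteq> {1..t}" using P fin by (auto simp: t_def)
    show "{1..t} \<subseteq> P"
    proof
      fix q assume q: "q \<in> {1..t}"
      then have "P \<noteq> {}" by (auto simp: t_def)
      then have "t \<in> P" using fin by (simp add: t_def)
      then show "q \<in> P" using down[of t "t - q"] q by auto
    qed
  qed
  moreover have "t \<le> N" using P fin by (auto simp: t_def)
  ultimately show False using ni by blast
qed

lemma vmap_bound: "l \<le> N \<Longrightarrow> v < n + m \<Longrightarrow> vmap n m l v < m + Suc N * n"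
proof -
  assume l: "l \<le> N" and v: "v < n + m"
  have "l*n + n \<le> Suc N * n" using mult_le_mono1[of "Suc l" "Suc N" n] l by simp
  show ?thesis
  proof (cases "v < n")
    case True
    have A: "l*n + v < l*n + n" using True by simp
    have B: "vmap n m l v = m + l*n + v" using True by (simp add: vmap_def)
    show ?thesis unfolding B using A \<open>l*n + n \<le> Suc N * n\<close> by linarith
  next
    case False
    then show ?thesis using v unfolding vmap_def by auto
  qed
qed

theorem theorem2p6:
  fixes M :: "('a, 'f, 'p) struct" and \<phi> :: "('f, 'p) fm"
    and n m N :: nat and E :: "nat set" and a b :: "nat \<Rightarrow> 'a list"
  assumes "is_struct M"
    and "is_formula2 n m \<phi>"
    and "\<forall>i. tuple M n (a i)"
    and "\<forall>j. tuple M m (b j)"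
    and "E \<subseteq> {1..N}"
    and "\<forall>idx. strict_mono_on {1..N} idx \<longrightarrow>
           \<not> (\<exists>y. tuple M m y \<and> (\<forall>k\<in>E. holds2 M n \<phi> (a (idx k)) y) \<and>
                 (\<forall>k\<in>{1..N} - E. \<not> holds2 M n \<phi> (a (idx k)) y))"
    and "\<forall>i j. holds2 M n \<phi> (a i) (b j) \<longleftrightarrow> i < j"
  shows "Th_has_SOP M"
proof -
  define R where "R P idx \<longleftrightarrow> (\<exists>y. tuple M m y \<and> (\<forall>k\<in>P. holds2 M n \<phi> (a (idx k)) y) \<and>
                 (\<forall>k\<in>{1..N} - P. \<not> holds2 M n \<phi> (a (idx k)) y))" for P and idx :: "nat \<Rightarrow> nat"
  have resp: "\<forall>Q\<in>R ` Pow {1..N}. \<forall>f g. (\<forall>p\<in>{1..N}. f p = g p) \<longrightarrow> Q f = Q g"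
  proof (intro ballI allI impI)
    fix Q and f g :: "nat \<Rightarrow> nat" assume "Q \<in> R ` Pow {1..N}" and fg: "\<forall>p\<in>{1..N}. f p = g p"
    then obtain P where P: "P \<subseteq> {1..N}" and Q: "Q = R P" by auto
    have "\<forall>k\<in>P. f k = g k" using P fg by auto
    then show "Q f = Q g" unfolding Q R_def using fg by (metis (no_types, lifting) Diff_iff)
  qed
  obtain h :: "nat \<Rightarrow> nat" where h: "strict_mono h" and hom0: "\<forall>Q\<in>R ` Pow {1..N}.
      (\<forall>idx. strict_mono_on {1..N} idx \<longrightarrow> Q (h \<circ> idx)) \<or>
      (\<forall>idx. strict_mono_on {1..N} idx \<longrightarrow> \<not> Q (h \<circ> idx))"
    using ramsey_many[OF _ resp] by blast
  have homP: "(\<forall>idx. strict_mono_on {1..N} idx \<longrightarrow> R P (h \<circ> idx)) \<or>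
      (\<forall>idx. strict_mono_on {1..N} idx \<longrightarrow> \<not> R P (h \<circ> idx))" if "P \<subseteq> {1..N}" for P
    using hom0 that by blast
  have smid: "strict_mono_on {1..N} (id::nat\<Rightarrow>nat)" by (simp add: strict_mono_on_def)
  have init: "R {1..t} (h \<circ> idx)" if t: "t \<le> N" and idx: "strict_mono_on {1..N} idx" for t idx
  proof -
    define j where "j = (if t = 0 then 0 else Suc (h (idx t)))"
    have mono: "h (idx k) \<le> h (idx t)" if "k \<in> {1..t}" for k
    proof (cases "k = t")
      case False
      then have "idx k < idx t" using idx that t unfolding strict_mono_on_def by auto
      then show ?thesis using h by (simp add: strict_mono_less_eq order_less_imp_le)
    qed simp
    have gt: "h (idx t) < h (idx k)" if "k \<in> {1..N} - {1..t}" "t \<noteq> 0" for k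
    proof -
      have "idx t < idx k" using idx that t unfolding strict_mono_on_def by auto
      then show ?thesis using h by (simp add: strict_mono_less)
    qed
    show ?thesis unfolding R_def
    proof (intro exI[of _ "b j"] conjI ballI)
      show "tuple M m (b j)" using assms(4) by simp
      fix k assume "k \<in> {1..t}"
      then show "holds2 M n \<phi> (a ((h \<circ> idx) k)) (b j)" using assms(7) mono[of k]
        by (auto simp: j_def)
    next
      fix k assume k: "k \<in> {1..N} - {1..t}"
      show "\<not> holds2 M n \<phi> (a ((h \<circ> idx) k)) (b j)"
      proof (cases "t = 0")
        case True then show ?thesis using assms(7) by (simp add: j_def)
      next
        case False then show ?thesis using assms(7) gt[OF k False] by (simp add: j_def)
      qed
    qed
  qed
  define Bad where "Bad P \<longleftrightarrow> P \<subseteq> {1..N} \<and> (\<forall>idx. strict_mono_on {1..N} idx \<longrightarrow> \<not> R P (h \<circ> idx))" for P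
  have "Bad E" unfolding Bad_def
  proof (intro conjI allI impI)
    show "E \<subseteq> {1..N}" by (rule assms(5))
    fix idx :: "nat \<Rightarrow> nat" assume "strict_mono_on {1..N} idx"
    then have "strict_mono_on {1..N} (h \<circ> idx)" by (rule smo_comp[OF h])
    then show "\<not> R E (h \<circ> idx)" using assms(6) unfolding R_def by blast
  qed
  then obtain E' where bad: "Bad E'" and minE: "\<forall>P. Bad P \<longrightarrow> (\<Sum>E') \<le> (\<Sum>P)"
    using ex_has_least_nat[of Bad E "\<lambda>P. \<Sum>P"] by blast
  have E'sub: "E' \<subseteq> {1..N}" using bad by (simp add: Bad_def)
  have "\<forall>t\<le>N. E' \<noteq> {1..t}"
  proof (intro allI impI notI)
    fix t assume "t \<le> N" "E' = {1..t}"
    then show False using init[OF _ smid, of t] bad smid unfolding Bad_def by auto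
  qed
  then obtain k where k1: "1 \<le> k" and kN: "Suc k \<le> N" and kE: "k \<notin> E'" and skE: "Suc k \<in> E'"
    using not_init[OF E'sub] by blast
  define S where "S = insert k (E' - {Suc k})"
  have Ssub: "S \<subseteq> {1..N}" using E'sub k1 kN by (auto simp: S_def)
  have finE: "finite E'" using E'sub finite_subset by blast
  have "(\<Sum>S) < (\<Sum>E')"
  proof -
    have "(\<Sum>S) = k + (\<Sum>(E' - {Suc k}))" unfolding S_def using finE kE by simp
    moreover have "(\<Sum>E') = Suc k + (\<Sum>(E' - {Suc k}))" using finE skE by (simp add: sum.remove)
    ultimately show ?thesis by simp
  qed
  then have "\<not> Bad S" using minE by fastforce
  then have RS: "R S (h \<circ> idx)" if "strict_mono_on {1..N} idx" for idx
    using homP[OF Ssub] Ssub that unfolding Bad_def by blast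
  have RE': "\<not> R E' (h \<circ> idx)" if "strict_mono_on {1..N} idx" for idx
    using bad that unfolding Bad_def by blast
  define lits where "lits = map (\<lambda>p. (p \<in> E', p)) (filter (\<lambda>p. p \<noteq> Suc k) [1..<Suc N])"
  define \<theta> where "\<theta> = thetaF n m \<phi> lits"
  have fvphi: "fv \<phi> \<subseteq> {..<n+m}" using assms(2) by (simp add: is_formula2_def)
  have lits_lt: "\<forall>(s,l)\<in>set lits. l < Suc N" unfolding lits_def by auto
  have "is_formula2 m (Suc N * n) \<theta>"
    unfolding is_formula2_def
  proof
    fix v assume "v \<in> fv \<theta>"
    then obtain s l w where sl: "(s,l) \<in> set lits" "w \<in> fv \<phi>" "v = vmap n m l w"
      using fv_thetaF[of n m \<phi> lits] unfolding \<theta>_def by blast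
    have "l < Suc N" using lits_lt sl(1) by auto
    moreover have "w < n + m" using fvphi sl(2) by auto
    ultimately have "vmap n m l w < m + Suc N * n" by (intro vmap_bound) auto
    then show "v \<in> {..<m + Suc N * n}" using sl(3) by simp
  qed
  moreover have "\<exists>c. (\<forall>i\<le>K. tuple M (Suc N * n) (c i)) \<and>
        (\<forall>i<K. defset M m \<theta> (c i) \<subset> defset M m \<theta> (c (Suc i)))" for K
  proof -
    define j where "j u p = (if p < k then p else if p = k then k + u else p + K)" for u p
    define c where "c u = concat (map (\<lambda>p. a (h (j u p))) [0..<Suc N])" for u
    have lenB: "\<forall>l<Suc N. length (a (h (j u l))) = n" for u using assms(3) by (simp add: tuple_def)
    have T: "y \<in> defset M m \<theta> (c u) \<longleftrightarrow> tuple M m y \<and>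
        (\<forall>p\<in>{1..N} - {Suc k}. holds2 M n \<phi> (a (h (j u p))) y \<longleftrightarrow> p \<in> E')" for u y
    proof (cases "tuple M m y")
      case True
      then have ly: "length y = m" by (simp add: tuple_def)
      have "holds2 M m \<theta> y (c u) \<longleftrightarrow> (\<forall>(s,l)\<in>set lits. holds2 M n \<phi> (a (h (j u l))) y = s)"
        unfolding \<theta>_def c_def by (rule holds_thetaF[OF fvphi ly lenB lits_lt])
      also have "\<dots> \<longleftrightarrow> (\<forall>p\<in>{1..N} - {Suc k}. holds2 M n \<phi> (a (h (j u p))) y \<longleftrightarrow> p \<in> E')"
        unfolding lits_def by auto
      finally show ?thesis using True by (simp add: defset_def)
    qed (simp add: defset_def)
    show ?thesis
    proof (intro exI[of _ c] conjI allI impI)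
      fix i assume "i \<le> K"
      show "tuple M (Suc N * n) (c i)"
        unfolding tuple_def c_def using length_concat_blocks[OF lenB] assms(3)
        by (auto simp: tuple_def)
    next
      fix i assume iK: "i < K"
      define idx2 where "idx2 p = (if p = Suc k then k + Suc i else j i p)" for p
      have sm2: "strict_mono_on {1..N} idx2"
        unfolding strict_mono_on_def idx2_def j_def using iK by auto
      have i2k: "idx2 k = j i k" "idx2 (Suc k) = k + Suc i" by (auto simp: idx2_def)
      have jk: "j i k = k + i" "j (Suc i) k = k + Suc i" by (auto simp: j_def)
      have joth: "p \<noteq> k \<Longrightarrow> p \<noteq> Suc k \<Longrightarrow> idx2 p = j i p \<and> j (Suc i) p = j i p" for p
        by (auto simp: idx2_def j_def)
      have kin: "k \<in> {1..N} - {Suc k}" "Suc k \<in> {1..N}" using k1 kN by auto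
      show "defset M m \<theta> (c i) \<subset> defset M m \<theta> (c (Suc i))"
      proof
        show "defset M m \<theta> (c i) \<subseteq> defset M m \<theta> (c (Suc i))"
        proof
          fix y assume "y \<in> defset M m \<theta> (c i)"
          then have ty: "tuple M m y" and Ti: "\<forall>p\<in>{1..N} - {Suc k}. holds2 M n \<phi> (a (h (j i p))) y \<longleftrightarrow> p \<in> E'"
            using T by auto
          have nh: "\<not> holds2 M n \<phi> (a (h (k + Suc i))) y"
          proof
            assume hv: "holds2 M n \<phi> (a (h (k + Suc i))) y"
            have "R E' (h \<circ> idx2)" unfolding R_def
            proof (intro exI[of _ y] conjI ty ballI)
              fix p assume p: "p \<in> E'"
              show "holds2 M n \<phi> (a ((h \<circ> idx2) p)) y"
              proof (cases "p = Suc k")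
                case True then show ?thesis using hv by (simp add: idx2_def)
              next
                case False
                then have "idx2 p = j i p" by (simp add: idx2_def)
                then show ?thesis using Ti p False E'sub by auto
              qed
            next
              fix p assume p: "p \<in> {1..N} - E'"
              then have "p \<noteq> Suc k" using skE by auto
              then have "idx2 p = j i p" by (simp add: idx2_def)
              then show "\<not> holds2 M n \<phi> (a ((h \<circ> idx2) p)) y" using Ti p \<open>p \<noteq> Suc k\<close> by auto
            qed
            then show False using RE'[OF sm2] by simp
          qed
          have "\<forall>p\<in>{1..N} - {Suc k}. holds2 M n \<phi> (a (h (j (Suc i) p))) y \<longleftrightarrow> p \<in> E'"
          proof
            fix p assume p: "p \<in> {1..N} - {Suc k}"
            show "holds2 M n \<phi> (a (h (j (Suc i) p))) y \<longleftrightarrow> p \<in> E'"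
            proof (cases "p = k")
              case True then show ?thesis using nh kE jk by simp
            next
              case False then show ?thesis using joth[of p] Ti p by auto
            qed
          qed
          then show "y \<in> defset M m \<theta> (c (Suc i))" using T ty by blast
        qed
      next
        obtain y where ty: "tuple M m y" and yS: "\<forall>p\<in>S. holds2 M n \<phi> (a ((h \<circ> idx2) p)) y"
          and yN: "\<forall>p\<in>{1..N} - S. \<not> holds2 M n \<phi> (a ((h \<circ> idx2) p)) y"
          using RS[OF sm2] unfolding R_def by blast
        have kS: "k \<in> S" "Suc k \<notin> S" by (auto simp: S_def)
        have oth: "p \<in> S \<longleftrightarrow> p \<in> E'" if "p \<noteq> k" "p \<noteq> Suc k" for p
          using that by (auto simp: S_def)
        have "y \<in> defset M m \<theta> (c (Suc i))"
        proof -
          have "\<forall>p\<in>{1..N} - {Suc k}. holds2 M n \<phi> (a (h (j (Suc i) p))) y \<longleftrightarrow> p \<in> E'"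
          proof
            fix p assume p: "p \<in> {1..N} - {Suc k}"
            show "holds2 M n \<phi> (a (h (j (Suc i) p))) y \<longleftrightarrow> p \<in> E'"
            proof (cases "p = k")
              case True
              have "Suc k \<in> {1..N} - S" using kS(2) kin(2) by blast
              then have "\<not> holds2 M n \<phi> (a ((h \<circ> idx2) (Suc k))) y" using yN by blast
              then show ?thesis using True kE jk(2) i2k(2) by simp
            next
              case False
              have pS: "p \<in> S \<longleftrightarrow> p \<in> E'" using oth[of p] False p by blast
              have ip: "idx2 p = j i p" "j (Suc i) p = j i p" using joth[of p] False p by auto
              show ?thesis
              proof (cases "p \<in> S")
                case True
                then show ?thesis using yS pS ip by auto
              next
                case False
                then have "p \<in> {1..N} - S" using p by blast
                then have "\<not> holds2 M n \<phi> (a ((h \<circ> idx2) p)) y" using yN by blast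
                then show ?thesis using pS ip False by simp
              qed
            qed
          qed
          then show ?thesis using T ty by blast
        qed
        moreover have "y \<notin> defset M m \<theta> (c i)"
        proof
          assume "y \<in> defset M m \<theta> (c i)"
          then have "holds2 M n \<phi> (a (h (j i k))) y \<longleftrightarrow> k \<in> E'" using T kin(1) by blast
          moreover have "holds2 M n \<phi> (a (h (j i k))) y" using yS kS i2k by auto
          ultimately show False using kE by simp
        qed
        ultimately show "defset M m \<theta> (c i) \<noteq> defset M m \<theta> (c (Suc i))" by blast
      qed
    qed
  qed
  ultimately show ?thesis unfolding Th_has_SOP_def by blast
qed

end
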